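(* For prefixes $p,p',p''$, whenever both sides are defined (via the concatenation relation, which is a partial function), $p \cdot (p' \cdot p'') = (p \cdot p') \cdot p''$.
   Context: Prefixes are generated by $p ::= \mathtt{oneEmp} \mid \mathtt{oneFull} \mid \mathtt{epsEmp} \mid \mathtt{par}(p,p') \mid \mathtt{catA}(p) \mid \mathtt{catB}(p,p') \mid \mathtt{sumEmp} \mid \mathtt{inl}(p) \mid \mathtt{inr}(p) \mid \mathtt{starEmp} \mid \mathtt{starDone} \mid \mathtt{stA}(p) \mid \mathtt{stB}(p,p')$. The prefixes of type $1$ are exactly $\mathtt{oneEmp}$ and $\mathtt{oneFull}$. Prefix concatenation $p\cdot p'\sim p''$ (inductive): $\mathtt{epsEmp}\cdot\mathtt{epsEmp}\sim\mathtt{epsEmp}$; $\mathtt{oneEmp}\cdot p\sim p$ whenever $p$ is a prefix of type $1$; $\mathtt{oneFull}\cdot\mathtt{epsEmp}\sim\mathtt{oneFull}$; $\mathtt{par}(p_1,p_2)\cdot\mathtt{par}(p_1',p_2')\sim\mathtt{par}(p_1'',p_2'')$ if $p_i\cdot p_i'\sim p_i''$ for $i=1,2$; $\mathtt{catA}(p)\cdot\mathtt{catA}(p')\sim\mathtt{catA}(p'')$ if $p\cdot p'\sim p''$; $\mathtt{catA}(p)\cdot\mathtt{catB}(p',q)\sim\mathtt{catB}(p'',q)$ if $p\cdot p'\sim p''$; $\mathtt{catB}(p,p')\cdot p''\sim\mathtt{catB}(p,p''')$ if $p'\cdot p''\sim p'''$; $\mathtt{sumEmp}\cdot p\sim p$;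 $\mathtt{inl}(p)\cdot p'\sim\mathtt{inl}(p'')$ if $p\cdot p'\sim p''$; $\mathtt{inr}(p)\cdot p'\sim\mathtt{inr}(p'')$ if $p\cdot p'\sim p''$; $\mathtt{starEmp}\cdot p\sim p$; $\mathtt{starDone}\cdot\mathtt{epsEmp}\sim\mathtt{starDone}$; $\mathtt{stA}(p)\cdot\mathtt{catA}(p')\sim\mathtt{stA}(p'')$ if $p\cdot p'\sim p''$; $\mathtt{stA}(p)\cdot\mathtt{catB}(p',q)\sim\mathtt{stB}(p'',q)$ if $p\cdot p'\sim p''$; $\mathtt{stB}(p,p')\cdot p''\sim\mathtt{stB}(p,p''')$ if $p'\cdot p''\sim p'''$. We write $p\cdot p'$ for the unique $p''$ with $p\cdot p'\sim p''$ when it exists. *)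

theory Defs
  imports Main
begin

datatype prefix =
    oneEmp | oneFull | epsEmp
  | par prefix prefix
  | catA prefix | catB prefix prefix
  | sumEmp | inl prefix | inr prefix
  | starEmp | starDone | stA prefix | stB prefix prefix

definition is_one_prefix :: "prefix \<Rightarrow> bool" where
  "is_one_prefix p \<longleftrightarrow> p = oneEmp \<or> p = oneFull"

text \<open>Prefix concatenation relation: pconcat p p' p'' means p . p' ~ p''.\<close>
inductive pconcat :: "prefix \<Rightarrow> prefix \<Rightarrow> prefix \<Rightarrow> bool" where
  epsEmp: "pconcat epsEmp epsEmp epsEmp"
| oneEmp: "is_one_prefix p \<Longrightarrow> pconcat oneEmp p p"
| oneFull: "pconcat oneFull epsEmp oneFull"
| par: "pconcat p1 p1' p1'' \<Longrightarrow> pconcat p2 p2' p2'' \<Longrightarrow> pconcat (par p1 p2) (par p1' p2') (par p1'' p2'')"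
| catAA: "pconcat p p' p'' \<Longrightarrow> pconcat (catA p) (catA p') (catA p'')"
| catAB: "pconcat p p' p'' \<Longrightarrow> pconcat (catA p) (catB p' q) (catB p'' q)"
| catB: "pconcat p' p'' p''' \<Longrightarrow> pconcat (catB p p') p'' (catB p p''')"
| sumEmp: "pconcat sumEmp p p"
| inl: "pconcat p p' p'' \<Longrightarrow> pconcat (inl p) p' (inl p'')"
| inr: "pconcat p p' p'' \<Longrightarrow> pconcat (inr p) p' (inr p'')"
| starEmp: "pconcat starEmp p p"
| starDone: "pconcat starDone epsEmp starDone"
| stAA: "pconcat p p' p'' \<Longrightarrow> pconcat (stA p) (catA p') (stA p'')"
| stAB: "pconcat p p' p'' \<Longrightarrow> pconcat (stA p) (catB p' q) (stB p'' q)"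
| stB: "pconcat p' p'' p''' \<Longrightarrow> pconcat (stB p p') p'' (stB p p''')"

end

theory Submission
  imports Defs
begin
inductive_cases epsE: "pconcat epsEmp q r"
inductive_cases oneEmpE: "pconcat oneEmp q r"
inductive_cases oneFullE: "pconcat oneFull q r"
inductive_cases parE: "pconcat (par x y) q r"
inductive_cases catAE: "pconcat (catA x) q r"
inductive_cases catBE: "pconcat (catB x y) q r"
inductive_cases sumEmpE: "pconcat sumEmp q r"
inductive_cases inlE: "pconcat (inl x) q r"
inductive_cases inrE: "pconcat (inr x) q r"
inductive_cases starEmpE: "pconcat starEmp q r"
inductive_cases starDoneE: "pconcat starDone q r"
inductive_cases stAE: "pconcat (stA x) q r"
inductive_cases stBE: "pconcat (stB x y) q r"

lemma det: "pconcat p q r1 \<Longrightarrow> pconcat p q r2 \<Longrightarrow> r1 = r2"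
proof (induction arbitrary: r2 rule: pconcat.induct)
  case epsEmp then show ?case by (auto elim: epsE)
next case oneEmp then show ?case by (auto elim: oneEmpE)
next case oneFull then show ?case by (auto elim: oneFullE)
next case par from par.prems show ?case by (rule parE) (simp add: par.IH)
next case catAA from catAA.prems show ?case by (rule catAE) (simp_all add: catAA.IH)
next case catAB from catAB.prems show ?case by (rule catAE) (simp_all add: catAB.IH)
next case catB from catB.prems show ?case by (rule catBE) (simp add: catB.IH)
next case sumEmp then show ?case by (auto elim: sumEmpE)
next case inl from inl.prems show ?case by (rule inlE) (simp add: inl.IH)
next case inr from inr.prems show ?case by (rule inrE) (simp add: inr.IH)
next case starEmp then show ?case by (auto elim: starEmpE)
next case starDone then show ?case by (auto elim: starDoneE)
next case stAA from stAA.prems show ?case by (rule stAE) (simp_all add: stAA.IH)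
next case stAB from stAB.prems show ?case by (rule stAE) (simp_all add: stAB.IH)
next case stB from stB.prems show ?case by (rule stBE) (simp add: stB.IH)
qed

lemma assoc: "pconcat p p' b \<Longrightarrow> pconcat b p'' r \<Longrightarrow> pconcat p' p'' a \<Longrightarrow> pconcat p a r"
proof (induction arbitrary: p'' r a rule: pconcat.induct)
  case epsEmp then show ?case by (auto elim!: epsE intro: pconcat.intros)
next
  case (oneEmp q)
  then have "a = r" using det[of q p'' a r] by blast
  moreover have "is_one_prefix a"
  proof -
    have "q = oneEmp \<or> q = oneFull" using oneEmp.hyps by (simp add: is_one_prefix_def)
    then show ?thesis
    proof
      assume "q = oneEmp" then show ?thesis using oneEmp.prems(2) by (auto elim: oneEmpE)
    next
      assume "q = oneFull" then show ?thesis using oneEmp.prems(2) by (auto elim: oneFullE simp: is_one_prefix_def)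
    qed
  qed
  ultimately show ?case by (auto intro: pconcat.intros)
next
  case oneFull then show ?case by (auto elim!: epsE oneFullE intro: pconcat.intros)
next
  case (par p1 p1' p1'' p2 p2' p2'')
  from par.prems obtain q1 q2 r1 r2 where "p'' = par q1 q2" "r = par r1 r2"
     "pconcat p1'' q1 r1" "pconcat p2'' q2 r2" by (auto elim: parE)
  moreover from par.prems this obtain a1 a2 where "a = par a1 a2" "pconcat p1' q1 a1" "pconcat p2' q2 a2"
     by (auto elim: parE)
  ultimately show ?case using par.IH by (auto intro: pconcat.intros)
next
  case (catAA x y z)
  from catAA.prems(1) have "(\<exists>w z'. p'' = catA w \<and> r = catA z' \<and> pconcat z w z') \<or> (\<exists>w z' v. p'' = catB w v \<and> r = catB z' v \<and> pconcat z w z')"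
    by (auto elim: catAE)
  then show ?case
  proof
    assume "\<exists>w z'. p'' = catA w \<and> r = catA z' \<and> pconcat z w z'"
    then obtain w z' where w: "p'' = catA w" "r = catA z'" "pconcat z w z'" by blast
    with catAA.prems(2) obtain a' where "a = catA a'" "pconcat y w a'" by (auto elim: catAE)
    with w catAA.IH show ?thesis by (auto intro: pconcat.intros)
  next
    assume "\<exists>w z' v. p'' = catB w v \<and> r = catB z' v \<and> pconcat z w z'"
    then obtain w z' v where w: "p'' = catB w v" "r = catB z' v" "pconcat z w z'" by blast
    with catAA.prems(2) obtain a' where "a = catB a' v" "pconcat y w a'" by (auto elim: catAE)
    with w catAA.IH show ?thesis by (auto intro: pconcat.intros)
  qed
next
  case (catAB x y z q)
  from catAB.prems obtain w where "r = catB z w" "pconcat q p'' w" by (auto elim: catBE)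
  moreover from catAB.prems this have "a = catB y w" by (auto elim!: catBE dest: det)
  ultimately show ?case using catAB by (auto intro: pconcat.intros)
next
  case (catB y z0 z x)
  from catB.prems obtain w where "r = catB x w" "pconcat z p'' w" by (auto elim: catBE)
  with catB show ?case by (auto intro: pconcat.intros)
next
  case (sumEmp q) then show ?case using det[of q p'' a r] by (auto intro: pconcat.intros)
next
  case (inl x y z)
  from inl.prems obtain w where "r = inl w" "pconcat z p'' w" by (auto elim: inlE)
  with inl show ?case by (auto intro: pconcat.intros)
next
  case (inr x y z)
  from inr.prems obtain w where "r = inr w" "pconcat z p'' w" by (auto elim: inrE)
  with inr show ?case by (auto intro: pconcat.intros)
next
  case (starEmp q) then show ?case using det[of q p'' a r] by (auto intro: pconcat.intros)
next
  case starDone then show ?case by (auto elim!: epsE starDoneE intro: pconcat.intros)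
next
  case (stAA x y z)
  from stAA.prems(1) have "(\<exists>w z'. p'' = catA w \<and> r = stA z' \<and> pconcat z w z') \<or> (\<exists>w z' v. p'' = catB w v \<and> r = stB z' v \<and> pconcat z w z')"
    by (auto elim: stAE)
  then show ?case
  proof
    assume "\<exists>w z'. p'' = catA w \<and> r = stA z' \<and> pconcat z w z'"
    then obtain w z' where w: "p'' = catA w" "r = stA z'" "pconcat z w z'" by blast
    with stAA.prems(2) obtain a' where "a = catA a'" "pconcat y w a'" by (auto elim: catAE)
    with w stAA.IH show ?thesis by (auto intro: pconcat.intros)
  next
    assume "\<exists>w z' v. p'' = catB w v \<and> r = stB z' v \<and> pconcat z w z'"
    then obtain w z' v where w: "p'' = catB w v" "r = stB z' v" "pconcat z w z'" by blast
    with stAA.prems(2) obtain a' where "a = catB a' v" "pconcat y w a'" by (auto elim: catAE)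
    with w stAA.IH show ?thesis by (auto intro: pconcat.intros)
  qed
next
  case (stAB x y z q)
  from stAB.prems obtain w where "r = stB z w" "pconcat q p'' w" by (auto elim: stBE)
  moreover from stAB.prems this have "a = catB y w" by (auto elim!: catBE dest: det)
  ultimately show ?case using stAB by (auto intro: pconcat.intros)
next
  case (stB y z0 z x)
  from stB.prems obtain w where "r = stB x w" "pconcat z p'' w" by (auto elim: stBE)
  with stB show ?case by (auto intro: pconcat.intros)
qed

theorem mainTheorem9:
  fixes p p' p'' a b l r :: prefix
  assumes "pconcat p' p'' a" and "pconcat p a l"
      and "pconcat p p' b" and "pconcat b p'' r"
  shows "l = r"
  using det[OF assms(2) assoc[OF assms(3,4,1)]] .

end
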